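(* Let $N\ge1$, $G$ a positive integer, $D>0$, and let $h_1\le\cdots\le h_N$ be positive reals. (a) If $k\in\{1,\dots,N\}$ satisfies $(N-k)D\le h_k\le(N+1-k)D$, $x_k^*=h_k-(N-k)D$ and $S=(N-k)D+x_k^*$, then for every $n\in\{1,\dots,k-1\}$, $$\frac{2\sqrt{GS^3}}{k-n}\le\frac{D\sqrt{G}}{\frac{1}{\sqrt{S}}-\frac{1}{\sqrt{(N-n)D+x_k^*}}}.$$ (b) If $m\in\{1,\dots,N-1\}$ satisfies $h_m<(N-m)D<h_{m+1}$ and $T=(N-m)D$, then for every $n\in\{1,\dots,m\}$, $$\frac{2\sqrt{GT^3}}{m-n+1}\le\frac{D\sqrt{G}}{\frac{1}{\sqrt{T}}-\frac{1}{\sqrt{(N-n+1)D}}}.$$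
   Context: In the paper, $h_n=\sqrt[3]{\rho_n^2/(4GE_n^2)}$ for clients with valuations $\rho_n>0$ and computation cost coefficients $E_n>0$ sorted by $\rho_n/E_n$; the left-hand sides are denoted $B_n$ (resp. $B'_n$) and the right-hand sides $O_n$ (resp. $O'_n$). *)

theory Defs
  imports Complex_Main
begin

end

theory Submission
  imports Defs
begin

lemma key2:
  fixes a b g D j :: real
  assumes a: "a > 0" and ab: "b > a" and g: "g > 0" and D: "D > 0" and j: "j > 0"
    and e: "j * D = b^2 - a^2"
  shows "2 * (g * a^3) / j \<le> D * g / (1/a - 1/b)"
proof -
  have b: "b > 0" using a ab by linarith
  have d: "1/a - 1/b = (b - a) / (a*b)" using a b by (simp add: field_simps)
  have dp: "(b - a) / (a*b) > 0" using a b ab by simp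
  have "D * g / (1/a - 1/b) = D * g * a * b / (b - a)" using a b ab d by (simp add: field_simps)
  also have "... = g * (j * D) * a * b / (j * (b - a))" using j ab by (simp add: field_simps)
  also have "... = g * ((b - a) * (b + a)) * a * b / (j * (b - a))"
  proof -
    have "j * D = (b - a) * (b + a)" using e by (simp add: power2_eq_square algebra_simps)
    thus ?thesis by (simp add: mult.assoc mult.left_commute)
  qed
  also have "... = g * a * b * (b + a) / j" using j ab by (simp add: field_simps)
  finally have r: "D * g / (1/a - 1/b) = g * a * b * (b + a) / j" .
  have "2 * a^2 \<le> b * (b + a)" using a ab
    by (smt (verit) mult_strict_mono power2_eq_square distrib_left)
  hence "g * a * (2 * a^2) \<le> g * a * (b * (b + a))" using a g by simp
  hence "2 * (g * a^3) \<le> g * a * b * (b + a)" by (simp add: power2_eq_square power3_eq_cube algebra_simps)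
  thus ?thesis using r j by (simp add: divide_right_mono)
qed

lemma key:
  fixes S G D j :: real
  assumes S: "S > 0" and G: "G > 0" and D: "D > 0" and j: "j > 0"
  shows "2 * sqrt (G * S ^ 3) / j \<le> D * sqrt G / (1 / sqrt S - 1 / sqrt (S + j * D))"
proof -
  have jD: "j * D > 0" using j D by simp
  have "sqrt (S + j*D) > sqrt S" using jD by simp
  moreover have "sqrt (G * S^3) = sqrt G * (sqrt S)^3"
    by (simp add: real_sqrt_mult real_sqrt_power)
  moreover have "j * D = (sqrt (S + j*D))^2 - (sqrt S)^2" using S jD by simp
  ultimately show ?thesis using key2[of "sqrt S" "sqrt (S + j*D)" "sqrt G" D j] S G D j
    by (simp add: mult.commute)
qed

theorem lemma3:
  fixes N G :: nat and D :: real and h :: "nat \<Rightarrow> real"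
  assumes "N \<ge> 1" and "G > 0" and "D > 0"
    and "\<forall>i\<in>{1..N}. h i > 0"
    and "\<forall>i j. 1 \<le> i \<longrightarrow> i \<le> j \<longrightarrow> j \<le> N \<longrightarrow> h i \<le> h j"
  shows "(\<forall>k\<in>{1..N}. \<forall>x S.
            real (N - k) * D \<le> h k \<and> h k \<le> real (N + 1 - k) * D
            \<and> x = h k - real (N - k) * D \<and> S = real (N - k) * D + x
          \<longrightarrow> (\<forall>n\<in>{1..k - 1}.
                2 * sqrt (real G * S ^ 3) / real (k - n)
                \<le> D * sqrt (real G) / (1 / sqrt S - 1 / sqrt (real (N - n) * D + x))))
       \<and> (\<forall>m\<in>{1..N - 1}. \<forall>T.
            h m < real (N - m) * D \<and> real (N - m) * D < h (m + 1) \<and> T = real (N - m) * D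
          \<longrightarrow> (\<forall>n\<in>{1..m}.
                2 * sqrt (real G * T ^ 3) / real (m - n + 1)
                \<le> D * sqrt (real G) / (1 / sqrt T - 1 / sqrt (real (N - n + 1) * D))))"
proof (intro conjI ballI allI impI)
  fix k x S n
  assume k: "k \<in> {1..N}" and H: "real (N - k) * D \<le> h k \<and> h k \<le> real (N + 1 - k) * D
            \<and> x = h k - real (N - k) * D \<and> S = real (N - k) * D + x" and n: "n \<in> {1..k - 1}"
  have S: "S = h k" using H by simp
  have Sp: "S > 0" using S assms(4) k by auto
  have nk: "n \<le> k" "k \<le> N" using n k by auto
  have e: "real (N - n) * D + x = S + real (k - n) * D" using H nk
    by (simp add: of_nat_diff algebra_simps)
  have "real (k - n) > 0" using n by auto
  thus "2 * sqrt (real G * S ^ 3) / real (k - n)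
                \<le> D * sqrt (real G) / (1 / sqrt S - 1 / sqrt (real (N - n) * D + x))"
    unfolding e using key[of S "real G" D "real (k - n)"] Sp assms(2,3) by simp
next
  fix m T n
  assume m: "m \<in> {1..N - 1}" and H: "h m < real (N - m) * D \<and> real (N - m) * D < h (m + 1) \<and> T = real (N - m) * D"
    and n: "n \<in> {1..m}"
  have Tp: "T > 0" using H m assms(3) by auto
  have nk: "n \<le> m" "m \<le> N" using n m by auto
  have e: "real (N - n + 1) * D = T + real (m - n + 1) * D" using H nk
    by (simp add: of_nat_diff algebra_simps)
  have "real (m - n + 1) > 0" by simp
  thus "2 * sqrt (real G * T ^ 3) / real (m - n + 1)
                \<le> D * sqrt (real G) / (1 / sqrt T - 1 / sqrt (real (N - n + 1) * D))"
    unfolding e using key[of T "real G" D "real (m - n + 1)"] Tp assms(2,3) by simp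
qed

end
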